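(* Let $\{a^1,\ldots,a^n\}\subseteq \mathbb{Z}^m$, let $C:=\operatorname{cone}\{a^1,\ldots,a^n\}$, and let $p$ be a prime. Then $\{a^1,\ldots,a^n\}$ is a $p$-adic generating set for a cone if, and only if, for every nonempty face $F$ of $C$, the set $\{a^i:a^i\in F\}$ is a $p$-adic generating set for a subspace.
   Context: A $p$-adic rational is a number $a/p^k$ with $a,k\in\mathbb{Z}$, $k\ge0$; a vector is $p$-adic if all entries are $p$-adic rationals. A finite set $S\subseteq\mathbb{Z}^m$ is a $p$-adic generating set for a cone if every integral vector in the conic hull of $S$ is a conic combination of the elements of $S$ with $p$-adic coefficients; it is a $p$-adic generating set for a subspace if every integral vector in the linear hull of $S$ is a linear combination of the elements of $S$ with $p$-adic coefficients. *)

theory Defs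
  imports "HOL-Analysis.Analysis" "HOL-Computational_Algebra.Primes"
begin

definition padic_rat :: "nat \<Rightarrow> real \<Rightarrow> bool" where
  "padic_rat p x \<longleftrightarrow> (\<exists>(a::int) (k::nat). x = of_int a / (real p) ^ k)"

definition integral_vec :: "real ^ 'm \<Rightarrow> bool" where
  "integral_vec x \<longleftrightarrow> (\<forall>i. x $ i \<in> \<int>)"

definition padic_gen_cone :: "nat \<Rightarrow> (real ^ 'm) set \<Rightarrow> bool" where
  "padic_gen_cone p S \<longleftrightarrow>
     (\<forall>x. integral_vec x \<and> x \<in> convex_cone hull S \<longrightarrow>
        (\<exists>c. (\<forall>s\<in>S. c s \<ge> 0 \<and> padic_rat p (c s)) \<and> x = (\<Sum>s\<in>S. c s *\<^sub>R s)))"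

definition padic_gen_subspace :: "nat \<Rightarrow> (real ^ 'm) set \<Rightarrow> bool" where
  "padic_gen_subspace p S \<longleftrightarrow>
     (\<forall>x. integral_vec x \<and> x \<in> span S \<longrightarrow>
        (\<exists>c. (\<forall>s\<in>S. padic_rat p (c s)) \<and> x = (\<Sum>s\<in>S. c s *\<^sub>R s)))"

end

theory Submission
  imports Defs
begin



lemma cch_sum:
  assumes "finite I" "\<And>i. i \<in> I \<Longrightarrow> f i \<in> convex_cone hull S"
  shows "sum f I \<in> convex_cone hull S"
  using assms by (induction I rule: finite_induct)
    (auto intro: convex_cone_hull_add convex_cone_hull_contains_0)

lemma cch_finite:
  fixes A :: "'a::real_vector set"
  assumes "finite A"
  shows "convex_cone hull A = {y. \<exists>c. (\<forall>a\<in>A. 0 \<le> c a) \<and> y = (\<Sum>a\<in>A. c a *\<^sub>R a)}"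
proof
  show "convex_cone hull A \<subseteq> {y. \<exists>c. (\<forall>a\<in>A. 0 \<le> c a) \<and> y = (\<Sum>a\<in>A. c a *\<^sub>R a)}"
  proof
    fix y assume "y \<in> convex_cone hull A"
    then consider "y = 0" | x t where "x \<in> convex hull A" "0 \<le> t" "y = t *\<^sub>R x"
      unfolding convex_cone_hull_convex_hull by auto
    then show "y \<in> {y. \<exists>c. (\<forall>a\<in>A. 0 \<le> c a) \<and> y = (\<Sum>a\<in>A. c a *\<^sub>R a)}"
    proof cases
      case 1 then show ?thesis by (auto intro!: exI[of _ "\<lambda>_. 0"])
    next
      case 2
      then obtain u where u: "\<forall>x\<in>A. 0 \<le> u x" "x = (\<Sum>a\<in>A. u a *\<^sub>R a)"
        using convex_hull_finite[OF assms] by auto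
      show ?thesis using 2 u
        by (auto intro!: exI[of _ "\<lambda>a. t * u a"] simp: scaleR_sum_right)
    qed
  qed
next
  show "{y. \<exists>c. (\<forall>a\<in>A. 0 \<le> c a) \<and> y = (\<Sum>a\<in>A. c a *\<^sub>R a)} \<subseteq> convex_cone hull A"
  proof safe
    fix c :: "'a \<Rightarrow> real" assume "\<forall>a\<in>A. 0 \<le> c a"
    then show "(\<Sum>a\<in>A. c a *\<^sub>R a) \<in> convex_cone hull A"
      using assms by (intro cch_sum) (auto intro: convex_cone_hull_mul hull_inc)
  qed
qed

lemma face_cone:
  assumes F: "F face_of C" and C: "convex_cone C" and x: "x \<in> F" and t: "0 \<le> t"
  shows "t *\<^sub>R x \<in> F"
proof -
  have FC: "F \<subseteq> C" "convex F" and fo: "\<And>a b y. a \<in> C \<Longrightarrow> b \<in> C \<Longrightarrow> y \<in> F \<Longrightarrow> y \<in> open_segment a b \<Longrightarrow> a \<in> F \<and> b \<in> F"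
    using F unfolding face_of_def by blast+
  have conic: "\<And>y s. y \<in> C \<Longrightarrow> 0 \<le> s \<Longrightarrow> s *\<^sub>R y \<in> C"
    using C by (simp add: conic_mul convex_cone_def)
  show ?thesis
  proof (cases "x = 0")
    case True then show ?thesis using x by simp
  next
    case False
    have x2: "x \<in> open_segment 0 (2 *\<^sub>R x)"
    proof -
      have "(0::'a) \<noteq> 2 *\<^sub>R x" using False by simp
      moreover have "x = (1 - 1/2) *\<^sub>R 0 + (1/2) *\<^sub>R (2 *\<^sub>R x)" by simp
      ultimately show ?thesis unfolding in_segment(2) by (intro conjI exI[of _ "1/2"]) simp_all
    qed
    have xC: "x \<in> C" using FC x by blast
    have "0 \<in> F" using fo[OF convex_cone_contains_0[OF C] conic[OF xC, of 2] x x2] by simp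
    show ?thesis
    proof (cases "t \<le> 1")
      case True
      have "t *\<^sub>R x = (1 - t) *\<^sub>R 0 + t *\<^sub>R x" by simp
      then show ?thesis using convexD[OF FC(2) \<open>0 \<in> F\<close> x, of "1-t" t] True t by simp
    next
      case False
      have "x \<in> open_segment 0 (t *\<^sub>R x)"
        using False \<open>x \<noteq> 0\<close> unfolding in_segment by (auto intro!: exI[of _ "1/t"])
      then show ?thesis using fo[OF convex_cone_contains_0[OF C] conic[OF xC t] x] by simp
    qed
  qed
qed

lemma face_add:
  assumes F: "F face_of C" and C: "convex_cone C" and u: "u \<in> C" and v: "v \<in> C"
    and uv: "u + v \<in> F"
  shows "u \<in> F"
proof -
  have FC: "F \<subseteq> C" "convex F" and fo: "\<And>a b y. a \<in> C \<Longrightarrow> b \<in> C \<Longrightarrow> y \<in> F \<Longrightarrow> y \<in> open_segment a b \<Longrightarrow> a \<in> F \<and> b \<in> F"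
    using F unfolding face_of_def by blast+
  have conic: "\<And>y s. y \<in> C \<Longrightarrow> 0 \<le> s \<Longrightarrow> s *\<^sub>R y \<in> C"
    using C by (simp add: conic_mul convex_cone_def)
  have "2 *\<^sub>R u \<in> F"
  proof (cases "u = v")
    case True
    then show ?thesis using uv by (simp add: scaleR_2)
  next
    case False
    have "u + v \<in> open_segment (2 *\<^sub>R u) (2 *\<^sub>R v)"
    proof -
      have "2 *\<^sub>R u \<noteq> 2 *\<^sub>R v" using False by simp
      moreover have "u + v = (1 - 1/2) *\<^sub>R (2 *\<^sub>R u) + (1/2) *\<^sub>R (2 *\<^sub>R v)" by simp
      ultimately show ?thesis unfolding in_segment(2) by (intro conjI exI[of _ "1/2"]) simp_all
    qed
    then show ?thesis using fo[OF conic[OF u, of 2] conic[OF v, of 2] uv] by simp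
  qed
  from face_cone[OF F C this, of "1/2"] show ?thesis by simp
qed


lemma face_sum:
  fixes S :: "'a::real_vector set"
  assumes S: "finite S" and F: "F face_of (convex_cone hull S)"
    and c: "\<forall>s\<in>S. 0 \<le> c s" and inF: "(\<Sum>s\<in>S. c s *\<^sub>R s) \<in> F"
    and s: "s \<in> S" and pos: "c s > 0"
  shows "s \<in> F"
proof -
  have C: "convex_cone (convex_cone hull S)" by (rule convex_cone_convex_cone_hull)
  have "(\<Sum>s\<in>S. c s *\<^sub>R s) = c s *\<^sub>R s + (\<Sum>t\<in>S - {s}. c t *\<^sub>R t)"
    using S s by (simp add: sum.remove)
  moreover have "c s *\<^sub>R s \<in> convex_cone hull S"
    using s pos by (intro convex_cone_hull_mul hull_inc) auto
  moreover have "(\<Sum>t\<in>S - {s}. c t *\<^sub>R t) \<in> convex_cone hull S"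
    using S c by (intro cch_sum) (auto intro: convex_cone_hull_mul hull_inc)
  ultimately have "c s *\<^sub>R s \<in> F" using face_add[OF F C] inF by metis
  from face_cone[OF F C this, of "1 / c s"] pos show ?thesis by simp
qed

lemma face_convex_cone:
  assumes F: "F face_of C" and C: "convex_cone C" and ne: "F \<noteq> {}"
  shows "convex_cone F"
  unfolding convex_cone_def conic_def
  using ne face_of_imp_convex[OF F] face_cone[OF F C] by blast

lemma iv_add: "integral_vec x \<Longrightarrow> integral_vec y \<Longrightarrow> integral_vec (x + y)"
  by (auto simp: integral_vec_def)
lemma iv_diff: "integral_vec x \<Longrightarrow> integral_vec y \<Longrightarrow> integral_vec (x - y)"
  by (auto simp: integral_vec_def)
lemma iv_zero: "integral_vec 0"
  by (auto simp: integral_vec_def)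
lemma iv_nat: "integral_vec x \<Longrightarrow> integral_vec (real N *\<^sub>R x)"
  by (auto simp: integral_vec_def)
lemma iv_sum: "finite I \<Longrightarrow> (\<And>i. i \<in> I \<Longrightarrow> integral_vec (f i)) \<Longrightarrow> integral_vec (sum f I)"
  by (induction I rule: finite_induct) (auto intro: iv_add iv_zero)

lemma padic_int: "padic_rat p (of_int a)"
  unfolding padic_rat_def by (intro exI[of _ a] exI[of _ 0]) simp
lemma padic_nat: "padic_rat p (real n)"
  using padic_int[of p "int n"] by simp
lemma padic_zero: "padic_rat p 0"
  using padic_int[of p 0] by simp
lemma padic_add:
  assumes "p > 0" "padic_rat p x" "padic_rat p y" shows "padic_rat p (x + y)"
proof -
  obtain a k b l where x: "x = of_int a / real p ^ k" and y: "y = of_int b / real p ^ l"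
    using assms unfolding padic_rat_def by blast
  have "x + y = of_int (a * int p ^ l + b * int p ^ k) / real p ^ (k + l)"
    using assms(1) by (simp add: x y field_simps power_add)
  then show ?thesis unfolding padic_rat_def by blast
qed
lemma padic_mult:
  assumes "padic_rat p x" "padic_rat p y" shows "padic_rat p (x * y)"
proof -
  obtain a k b l where x: "x = of_int a / real p ^ k" and y: "y = of_int b / real p ^ l"
    using assms unfolding padic_rat_def by blast
  have "x * y = of_int (a * b) / real p ^ (k + l)"
    by (simp add: x y power_add)
  then show ?thesis unfolding padic_rat_def by blast
qed
lemma padic_neg:
  assumes "padic_rat p x" shows "padic_rat p (- x)"
proof -
  obtain a k where x: "x = of_int a / real p ^ k"
    using assms unfolding padic_rat_def by blast
  have "- x = of_int (- a) / real p ^ k" by (simp add: x)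
  then show ?thesis unfolding padic_rat_def by blast
qed
lemma padic_diff:
  "p > 0 \<Longrightarrow> padic_rat p x \<Longrightarrow> padic_rat p y \<Longrightarrow> padic_rat p (x - y)"
  using padic_add[of p x "- y"] padic_neg[of p y] by simp
lemma padic_sum:
  "p > 0 \<Longrightarrow> (\<And>i. i \<in> I \<Longrightarrow> padic_rat p (f i)) \<Longrightarrow> padic_rat p (sum f I)"
  by (induction I rule: infinite_finite_induct) (auto intro: padic_add padic_zero)

lemma padic_dense:
  assumes p: "p \<ge> 2" and d: "\<delta> > 0"
  shows "\<exists>a. padic_rat p a \<and> \<bar>a - y\<bar> < \<delta>"
proof -
  obtain k where k: "1 / \<delta> < real p ^ k"
    using real_arch_pow[of "real p" "1/\<delta>"] p by auto
  have pk: "real p ^ k > 0" using p by simp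
  define a where "a = of_int \<lfloor>y * real p ^ k\<rfloor> / real p ^ k"
  have "padic_rat p a" unfolding a_def padic_rat_def by blast
  moreover have "\<bar>a - y\<bar> < \<delta>"
  proof -
    have "of_int \<lfloor>y * real p ^ k\<rfloor> \<le> y * real p ^ k" "y * real p ^ k < of_int \<lfloor>y * real p ^ k\<rfloor> + 1"
      by linarith+
    then have "a \<le> y" "y < a + 1 / real p ^ k"
      using pk unfolding a_def by (auto simp: field_simps)
    moreover have "1 / real p ^ k < \<delta>" using k d pk by (simp add: field_simps)
    ultimately show ?thesis by linarith
  qed
  ultimately show ?thesis by blast
qed

lemma dir1:
  fixes S :: "(real ^ 'm) set" and p :: nat
  assumes S: "finite S" and Sint: "\<forall>a\<in>S. integral_vec a" and p: "p > 0"
    and cone: "padic_gen_cone p S"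
    and F: "F face_of (convex_cone hull S)" and Fne: "F \<noteq> {}"
  shows "padic_gen_subspace p {a \<in> S. a \<in> F}"
  unfolding padic_gen_subspace_def
proof (intro allI impI, elim conjE)
  define W where "W = {a \<in> S. a \<in> F}"
  have W: "finite W" "W \<subseteq> S" "W \<subseteq> F" using S unfolding W_def by auto
  fix x assume xi: "integral_vec x" and xs: "x \<in> span {a \<in> S. a \<in> F}"
  then obtain d where xd: "x = (\<Sum>w\<in>W. d w *\<^sub>R w)"
    using span_finite[OF W(1)] unfolding W_def[symmetric] by auto
  obtain N :: nat where N: "(\<Sum>w\<in>W. \<bar>d w\<bar>) \<le> real N" using real_arch_simple by blast
  have dN: "0 \<le> d w + real N" if "w \<in> W" for w
  proof -
    have "\<bar>d w\<bar> \<le> (\<Sum>w\<in>W. \<bar>d w\<bar>)" using that W(1) by (intro member_le_sum) auto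
    then show ?thesis using N by linarith
  qed
  define y where "y = x + real N *\<^sub>R (\<Sum>w\<in>W. w)"
  have yd: "y = (\<Sum>w\<in>W. (d w + real N) *\<^sub>R w)"
    unfolding y_def xd by (simp add: scaleR_add_left sum.distrib scaleR_sum_right)
  have yW: "y \<in> convex_cone hull W"
    unfolding cch_finite[OF W(1)]
  proof (intro CollectI exI conjI)
    show "\<forall>a\<in>W. 0 \<le> d a + real N" using dN by blast
    show "y = (\<Sum>w\<in>W. (d w + real N) *\<^sub>R w)" by (rule yd)
  qed
  have CC: "convex_cone (convex_cone hull S)" by (rule convex_cone_convex_cone_hull)
  have yC: "y \<in> convex_cone hull S" using yW hull_mono[OF W(2)] by blast
  have yF: "y \<in> F"
  proof -
    have "convex_cone F" by (rule face_convex_cone[OF F CC Fne])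
    then have "convex_cone hull W \<subseteq> F" using W(3) by (intro hull_minimal) auto
    then show ?thesis using yW by blast
  qed
  have yi: "integral_vec y" unfolding y_def
    using xi Sint W by (intro iv_add iv_nat iv_sum) auto
  obtain c where c: "\<forall>s\<in>S. c s \<ge> 0 \<and> padic_rat p (c s)" and yc: "y = (\<Sum>s\<in>S. c s *\<^sub>R s)"
    using cone yi yC unfolding padic_gen_cone_def by blast
  have c0: "c s = 0" if "s \<in> S - W" for s
  proof (rule ccontr)
    assume "c s \<noteq> 0"
    then have "c s > 0" using c that by force
    then have "s \<in> F" using face_sum[OF S F, of c s] c yc yF that by auto
    then show False using that unfolding W_def by auto
  qed
  have yc': "y = (\<Sum>s\<in>W. c s *\<^sub>R s)"
    unfolding yc using S W c0 by (intro sum.mono_neutral_right) auto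
  have "x = (\<Sum>s\<in>W. (c s - real N) *\<^sub>R s)"
  proof -
    have "x = y - real N *\<^sub>R (\<Sum>w\<in>W. w)" unfolding y_def by simp
    also have "\<dots> = (\<Sum>s\<in>W. (c s - real N) *\<^sub>R s)"
      unfolding yc' by (simp add: scaleR_diff_left sum_subtractf scaleR_sum_right)
    finally show ?thesis .
  qed
  moreover have "\<forall>s\<in>W. padic_rat p (c s - real N)"
    using c W p by (auto intro!: padic_diff padic_nat)
  ultimately show "\<exists>c. (\<forall>s\<in>{a \<in> S. a \<in> F}. padic_rat p (c s)) \<and> x = (\<Sum>s\<in>{a \<in> S. a \<in> F}. c s *\<^sub>R s)"
    unfolding W_def by (intro exI[of _ "\<lambda>s. c s - real N"]) simp
qed



interpretation Qvs: vector_space "\<lambda>(q::rat) (x::real). of_rat q * x"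
  by unfold_locales (auto simp: algebra_simps of_rat_add of_rat_mult)

lemma rat_decomp:
  fixes T :: "(real ^ 'm) set" and d :: "real ^ 'm \<Rightarrow> real"
  assumes T: "finite T" and Tint: "\<forall>s\<in>T. integral_vec s"
    and ker: "(\<Sum>s\<in>T. d s *\<^sub>R s) = 0"
  shows "\<exists>B r. finite B \<and> (\<forall>s\<in>T. d s = (\<Sum>b\<in>B. of_rat (r b s) * b))
           \<and> (\<forall>b\<in>B. (\<Sum>s\<in>T. of_rat (r b s) *\<^sub>R s) = 0)"
proof -
  obtain B where B: "B \<subseteq> d ` T" "Qvs.independent B" "d ` T \<subseteq> Qvs.span B"
    using Qvs.maximal_independent_subset[of "d ` T"] by blast
  have fB: "finite B" using B(1) T finite_subset by blast
  define r where "r b s = Qvs.representation B (d s) b" for b s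
  have sp: "d s \<in> Qvs.span B" if "s \<in> T" for s using B(3) that by blast
  have dec: "\<forall>s\<in>T. d s = (\<Sum>b\<in>B. of_rat (r b s) * b)"
    unfolding r_def using Qvs.sum_representation_eq[OF B(2) sp fB] by auto
  have kerB: "(\<Sum>s\<in>T. of_rat (r b s) *\<^sub>R s) = 0" if b: "b \<in> B" for b
  proof (subst vec_eq_iff, intro allI)
    fix i
    define z where "z s = \<lfloor>s $ i\<rfloor>" for s :: "real ^ 'm"
    have zs: "s $ i = of_int (z s)" if "s \<in> T" for s
      using Tint that unfolding integral_vec_def z_def by (metis floor_of_int Ints_cases)
    have "(\<Sum>s\<in>T. d s * s $ i) = 0"
      using arg_cong[OF ker, of "\<lambda>v. v $ i"] by simp
    then have "(\<Sum>s\<in>T. of_rat (of_int (z s)) * d s) = 0"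
      using zs by (simp add: mult.commute)
    then have "Qvs.representation B (\<Sum>s\<in>T. of_rat (of_int (z s)) * d s) b = 0"
      by (simp add: Qvs.representation_zero)
    moreover have "Qvs.representation B (\<Sum>s\<in>T. of_rat (of_int (z s)) * d s) b
        = (\<Sum>s\<in>T. of_int (z s) * r b s)"
    proof -
      have "Qvs.representation B (\<Sum>s\<in>T. of_rat (of_int (z s)) * d s)
          = (\<lambda>b. \<Sum>s\<in>T. Qvs.representation B (of_rat (of_int (z s)) * d s) b)"
        using sp by (intro Qvs.representation_sum[OF B(2)] Qvs.span_scale) auto
      also have "\<dots> = (\<lambda>b. \<Sum>s\<in>T. of_int (z s) * r b s)"
      proof (intro ext sum.cong refl)
        fix b s assume "s \<in> T"
        from Qvs.representation_scale[OF B(2) sp[OF this], of "of_int (z s)"]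
        show "Qvs.representation B (of_rat (of_int (z s)) * d s) b = of_int (z s) * r b s"
          unfolding r_def by (metis of_rat_of_int_eq)
      qed
      finally show ?thesis by simp
    qed
    ultimately have "(\<Sum>s\<in>T. of_int (z s) * r b s) = 0" by simp
    then have "of_rat (\<Sum>s\<in>T. of_int (z s) * r b s) = (0::real)" by simp
    then have "(\<Sum>s\<in>T. of_rat (r b s) * s $ i) = 0"
      using zs by (simp add: of_rat_sum of_rat_mult mult.commute)
    then show "(\<Sum>s\<in>T. of_rat (r b s) *\<^sub>R s) $ i = 0 $ i" by simp
  qed
  show ?thesis using fB dec kerB by blast
qed


lemma common_denom:
  fixes R :: "rat set"
  assumes "finite R"
  shows "\<exists>M::nat. M > 0 \<and> (\<forall>q\<in>R. real M * of_rat q \<in> \<int>)"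
  using assms
proof (induction R rule: finite_induct)
  case empty then show ?case by (intro exI[of _ 1]) auto
next
  case (insert q R)
  then obtain M :: nat where M: "M > 0" "\<forall>q\<in>R. real M * of_rat q \<in> \<int>" by blast
  obtain a den where qd: "quotient_of q = (a, den)" by (cases "quotient_of q")
  have den: "den > 0" using quotient_of_denom_pos[OF qd] .
  have q: "q = of_int a / of_int den" using quotient_of_div[OF qd] .
  define M' where "M' = M * nat den"
  have "M' > 0" using M den unfolding M'_def by simp
  moreover have "real M' * of_rat q \<in> \<int>"
  proof -
    have "real M' * of_rat q = of_int (int M * a)"
      using den unfolding M'_def q by (simp add: of_rat_divide field_simps)
    then show ?thesis by simp
  qed
  moreover have "real M' * of_rat q' \<in> \<int>" if "q' \<in> R" for q'
  proof -
    have "real M' * of_rat q' = of_int den * (real M * of_rat q')"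
      using den unfolding M'_def by simp
    moreover have "of_int den * (real M * of_rat q') \<in> \<int>" using Ints_mult[OF Ints_of_int M(2)[rule_format, OF that], of den] by simp
    ultimately show ?thesis by metis
  qed
  ultimately show ?case by blast
qed

lemma padic_Ints: "x \<in> \<int> \<Longrightarrow> padic_rat p x"
  by (metis Ints_cases padic_int)



lemma kernel_dense:
  fixes T :: "(real ^ 'm) set" and d :: "real ^ 'm \<Rightarrow> real"
  assumes T: "finite T" and Tint: "\<forall>s\<in>T. integral_vec s"
    and ker: "(\<Sum>s\<in>T. d s *\<^sub>R s) = 0" and p: "p \<ge> 2" and e: "\<epsilon> > 0"
  shows "\<exists>k. (\<forall>s\<in>T. padic_rat p (k s)) \<and> (\<Sum>s\<in>T. k s *\<^sub>R s) = 0 \<and> (\<forall>s\<in>T. \<bar>k s - d s\<bar> < \<epsilon>)"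
proof -
  obtain B r where fB: "finite B" and dec: "\<forall>s\<in>T. d s = (\<Sum>b\<in>B. of_rat (r b s) * b)"
    and kerB: "\<forall>b\<in>B. (\<Sum>s\<in>T. of_rat (r b s) *\<^sub>R s) = 0"
    using rat_decomp[OF T Tint ker] by blast
  obtain M :: nat where M: "M > 0" "\<forall>q\<in>(\<lambda>(b, s). r b s) ` (B \<times> T). real M * of_rat q \<in> \<int>"
    using common_denom[of "(\<lambda>(b, s). r b s) ` (B \<times> T)"] fB T by blast
  define \<rho> where "\<rho> b s = real M * of_rat (r b s)" for b s
  have \<rho>Z: "\<rho> b s \<in> \<int>" if "b \<in> B" "s \<in> T" for b s
    using M(2) that unfolding \<rho>_def by force
  define Cb where "Cb = 1 + (\<Sum>s\<in>T. \<Sum>b\<in>B. \<bar>\<rho> b s\<bar>)"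
  have Cb1: "Cb \<ge> 1" unfolding Cb_def by (simp add: sum_nonneg)
  define \<delta> where "\<delta> = \<epsilon> / Cb"
  have \<delta>: "\<delta> > 0" unfolding \<delta>_def using e Cb1 by simp
  have "\<forall>b\<in>B. \<exists>a. padic_rat p a \<and> \<bar>a - b / real M\<bar> < \<delta>"
    using padic_dense[OF p \<delta>] by blast
  then obtain a where a: "\<forall>b\<in>B. padic_rat p (a b) \<and> \<bar>a b - b / real M\<bar> < \<delta>"
    by metis
  define k where "k s = (\<Sum>b\<in>B. a b * \<rho> b s)" for s
  have p0: "p > 0" using p by simp
  have "\<forall>s\<in>T. padic_rat p (k s)"
    unfolding k_def
  proof (intro ballI padic_sum[OF p0])
    fix s b assume "s \<in> T" "b \<in> B"
    then show "padic_rat p (a b * \<rho> b s)" using a \<rho>Z by (intro padic_mult[OF _ padic_Ints]) auto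
  qed
  moreover have "(\<Sum>s\<in>T. k s *\<^sub>R s) = 0"
  proof -
    have "(\<Sum>s\<in>T. k s *\<^sub>R s) = (\<Sum>s\<in>T. \<Sum>b\<in>B. (a b * real M) *\<^sub>R (of_rat (r b s) *\<^sub>R s))"
      unfolding k_def \<rho>_def by (simp add: scaleR_sum_left mult.assoc)
    also have "\<dots> = (\<Sum>b\<in>B. \<Sum>s\<in>T. (a b * real M) *\<^sub>R (of_rat (r b s) *\<^sub>R s))"
      by (rule sum.swap)
    also have "\<dots> = (\<Sum>b\<in>B. (a b * real M) *\<^sub>R (\<Sum>s\<in>T. of_rat (r b s) *\<^sub>R s))"
      by (simp add: scaleR_sum_right)
    also have "\<dots> = 0" using kerB by simp
    finally show ?thesis .
  qed
  moreover have "\<bar>k s - d s\<bar> < \<epsilon>" if s: "s \<in> T" for s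
  proof -
    have "d s = (\<Sum>b\<in>B. (b / real M) * \<rho> b s)"
      using dec s M(1) unfolding \<rho>_def by (auto intro!: sum.cong)
    then have "k s - d s = (\<Sum>b\<in>B. (a b - b / real M) * \<rho> b s)"
      unfolding k_def by (simp add: sum_subtractf left_diff_distrib)
    then have "\<bar>k s - d s\<bar> \<le> (\<Sum>b\<in>B. \<bar>a b - b / real M\<bar> * \<bar>\<rho> b s\<bar>)"
      by (metis (no_types, lifting) abs_mult sum.cong sum_abs)
    also have "\<dots> \<le> (\<Sum>b\<in>B. \<delta> * \<bar>\<rho> b s\<bar>)"
      using a by (intro sum_mono mult_right_mono) auto
    also have "\<dots> = \<delta> * (\<Sum>b\<in>B. \<bar>\<rho> b s\<bar>)" by (simp add: sum_distrib_left)
    also have "\<dots> < \<delta> * Cb"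
    proof -
      have "(\<Sum>b\<in>B. \<bar>\<rho> b s\<bar>) \<le> (\<Sum>s\<in>T. \<Sum>b\<in>B. \<bar>\<rho> b s\<bar>)"
        using T s by (intro member_le_sum) (auto intro: sum_nonneg)
      then show ?thesis unfolding Cb_def using \<delta> by simp
    qed
    also have "\<dots> = \<epsilon>" unfolding \<delta>_def using Cb1 by simp
    finally show ?thesis .
  qed
  ultimately show ?thesis by blast
qed



lemma dir2:
  fixes S :: "(real ^ 'm) set" and p :: nat
  assumes S: "finite S" and Sint: "\<forall>a\<in>S. integral_vec a" and p: "p \<ge> 2"
    and H: "\<forall>F. F face_of (convex_cone hull S) \<and> F \<noteq> {} \<longrightarrow> padic_gen_subspace p {a \<in> S. a \<in> F}"
  shows "padic_gen_cone p S"
  unfolding padic_gen_cone_def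
proof (intro allI impI, elim conjE)
  fix x assume xi: "integral_vec x" and xC: "x \<in> convex_cone hull S"
  have p0: "p > 0" using p by simp
  define rep where "rep c \<longleftrightarrow> (\<forall>s\<in>S. 0 \<le> c s) \<and> x = (\<Sum>s\<in>S. c s *\<^sub>R s)" for c :: "real ^ 'm \<Rightarrow> real"
  obtain l0 where l0: "rep l0" using xC unfolding cch_finite[OF S] rep_def by blast
  define T where "T = {s\<in>S. \<exists>c. rep c \<and> c s > 0}"
  have TS: "T \<subseteq> S" and fT: "finite T" using S unfolding T_def by auto
  have "\<forall>t\<in>T. \<exists>c. rep c \<and> c t > 0" unfolding T_def by blast
  then obtain cs where cs: "\<forall>t\<in>T. rep (cs t) \<and> cs t t > 0" by metis
  define n where "n = real (card T) + 1"
  have n: "n > 0" unfolding n_def by simp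
  define lam where "lam s = (l0 s + (\<Sum>t\<in>T. cs t s)) / n" for s
  have rep_nn: "0 \<le> c s" if "rep c" "s \<in> S" for c s using that unfolding rep_def by blast
  have rep_eq: "x = (\<Sum>s\<in>S. c s *\<^sub>R s)" if "rep c" for c using that unfolding rep_def by blast
  have lam_nn: "0 \<le> lam s" if "s \<in> S" for s
  proof -
    have "0 \<le> l0 s" using rep_nn[OF l0 that] .
    moreover have "0 \<le> (\<Sum>t\<in>T. cs t s)" using rep_nn cs that by (intro sum_nonneg) blast
    ultimately show ?thesis unfolding lam_def using n by simp
  qed
  have lam_sum: "x = (\<Sum>s\<in>S. lam s *\<^sub>R s)"
  proof -
    have "(\<Sum>s\<in>S. lam s *\<^sub>R s) = (1 / n) *\<^sub>R ((\<Sum>s\<in>S. l0 s *\<^sub>R s) + (\<Sum>t\<in>T. \<Sum>s\<in>S. cs t s *\<^sub>R s))"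
    proof -
      have "(\<Sum>s\<in>S. lam s *\<^sub>R s) = (1 / n) *\<^sub>R (\<Sum>s\<in>S. (l0 s + (\<Sum>t\<in>T. cs t s)) *\<^sub>R s)"
        unfolding lam_def scaleR_sum_right by (simp add: divide_inverse mult.commute)
      also have "(\<Sum>s\<in>S. (l0 s + (\<Sum>t\<in>T. cs t s)) *\<^sub>R s) = (\<Sum>s\<in>S. l0 s *\<^sub>R s) + (\<Sum>s\<in>S. \<Sum>t\<in>T. cs t s *\<^sub>R s)"
        by (simp add: scaleR_add_left scaleR_sum_left sum.distrib)
      also have "(\<Sum>s\<in>S. \<Sum>t\<in>T. cs t s *\<^sub>R s) = (\<Sum>t\<in>T. \<Sum>s\<in>S. cs t s *\<^sub>R s)"
        by (rule sum.swap)
      finally show ?thesis .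
    qed
    also have "\<dots> = (1 / n) *\<^sub>R (x + (\<Sum>t\<in>T. x))"
    proof -
      have "(\<Sum>s\<in>S. l0 s *\<^sub>R s) = x" by (rule rep_eq[OF l0, symmetric])
      moreover have "(\<Sum>t\<in>T. \<Sum>s\<in>S. cs t s *\<^sub>R s) = (\<Sum>t\<in>T. x)"
      proof (intro sum.cong refl)
        fix t assume "t \<in> T"
        then show "(\<Sum>s\<in>S. cs t s *\<^sub>R s) = x" using rep_eq cs by metis
      qed
      ultimately show ?thesis by simp
    qed
    also have "x + (\<Sum>t\<in>T. x) = n *\<^sub>R x" unfolding n_def by (subst sum_constant_scaleR) (simp add: scaleR_add_left algebra_simps)
    also have "(1 / n) *\<^sub>R (n *\<^sub>R x) = x" using n by simp
    finally show ?thesis by simp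
  qed
  have rep_lam: "rep lam" unfolding rep_def using lam_nn lam_sum by blast
  have lam_pos: "lam t > 0" if t: "t \<in> T" for t
  proof -
    have tS: "t \<in> S" using t TS by blast
    have "cs t t \<le> (\<Sum>t'\<in>T. cs t' t)"
      using fT t cs tS rep_nn by (intro member_le_sum) auto
    moreover have "0 \<le> l0 t" using rep_nn[OF l0 tS] .
    moreover have "cs t t > 0" using cs t by blast
    ultimately have "l0 t + (\<Sum>t'\<in>T. cs t' t) > 0" by linarith
    then show ?thesis unfolding lam_def using n by simp
  qed
  have lam0: "lam s = 0" if "s \<in> S" "s \<notin> T" for s
  proof -
    have "\<not> lam s > 0"
    proof
      assume "lam s > 0"
      then have "s \<in> T" unfolding T_def using rep_lam that(1) by blast
      then show False using that(2) by blast
    qed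
    then show ?thesis using lam_nn[OF that(1)] by linarith
  qed
  define F where "F = convex_cone hull T"
  have keyG: "s \<in> T" if z: "z \<in> F" and al: "\<forall>s\<in>S. 0 \<le> \<alpha> s" and za: "z = (\<Sum>s\<in>S. \<alpha> s *\<^sub>R s)"
      and s: "s \<in> S" and as: "\<alpha> s > 0" for z \<alpha> s
  proof -
    obtain \<nu> where \<nu>: "\<forall>t\<in>T. 0 \<le> \<nu> t" "z = (\<Sum>t\<in>T. \<nu> t *\<^sub>R t)"
      using z unfolding F_def cch_finite[OF fT] by blast
    define \<epsilon> where "\<epsilon> = Min (insert 1 ((\<lambda>t. lam t / (\<nu> t + 1)) ` T))"
    have \<epsilon>pos: "\<epsilon> > 0" unfolding \<epsilon>_def using fT lam_pos \<nu>(1)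
      by (subst Min_gr_iff) (auto intro!: divide_pos_pos add_nonneg_pos)
    have \<epsilon>\<nu>: "\<epsilon> * \<nu> t \<le> lam t" if t: "t \<in> T" for t
    proof -
      have "\<epsilon> \<le> lam t / (\<nu> t + 1)" unfolding \<epsilon>_def using fT t by (intro Min_le) auto
      moreover have "\<nu> t + 1 > 0" using \<nu>(1) t by force
      ultimately have "\<epsilon> * (\<nu> t + 1) \<le> lam t" by (simp add: pos_le_divide_eq)
      then show ?thesis using \<epsilon>pos by (simp add: algebra_simps)
    qed
    define c where "c s' = lam s' - (if s' \<in> T then \<epsilon> * \<nu> s' else 0) + \<epsilon> * \<alpha> s'" for s'
    have c_aux: "0 \<le> lam s' - (if s' \<in> T then \<epsilon> * \<nu> s' else 0)" if "s' \<in> S" for s'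
      using \<epsilon>\<nu>[of s'] lam_nn[OF that] by (cases "s' \<in> T") auto
    have c_nn: "0 \<le> c s'" if "s' \<in> S" for s'
    proof -
      have "0 \<le> \<epsilon> * \<alpha> s'" using al that \<epsilon>pos by simp
      then show ?thesis using c_aux[OF that] unfolding c_def by linarith
    qed
    have zT: "(\<Sum>s'\<in>S. (if s' \<in> T then \<epsilon> * \<nu> s' else 0) *\<^sub>R s') = \<epsilon> *\<^sub>R z"
    proof -
      have "(\<Sum>s'\<in>S. (if s' \<in> T then \<epsilon> * \<nu> s' else 0) *\<^sub>R s') = (\<Sum>s'\<in>S. if s' \<in> T then (\<epsilon> * \<nu> s') *\<^sub>R s' else 0)"
        by (intro sum.cong) auto
      also have "\<dots> = (\<Sum>s'\<in>S \<inter> T. (\<epsilon> * \<nu> s') *\<^sub>R s')"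
        using S by (simp add: sum.inter_restrict)
      also have "S \<inter> T = T" using TS by blast
      finally show ?thesis using \<nu>(2) by (simp add: scaleR_sum_right)
    qed
    have "(\<Sum>s'\<in>S. c s' *\<^sub>R s') = (\<Sum>s'\<in>S. lam s' *\<^sub>R s') - (\<Sum>s'\<in>S. (if s' \<in> T then \<epsilon> * \<nu> s' else 0) *\<^sub>R s') + \<epsilon> *\<^sub>R (\<Sum>s'\<in>S. \<alpha> s' *\<^sub>R s')"
      unfolding c_def by (simp add: scaleR_add_left scaleR_diff_left sum.distrib sum_subtractf scaleR_sum_right)
    also have "\<dots> = x" using zT za lam_sum by simp
    finally have "rep c" unfolding rep_def using c_nn by simp
    moreover have "c s > 0"
    proof -
      have "0 < \<epsilon> * \<alpha> s" using as \<epsilon>pos by simp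
      then show ?thesis using c_aux[OF s] unfolding c_def by linarith
    qed
    ultimately show ?thesis using s unfolding T_def by blast
  qed
  have inF: "(\<Sum>s\<in>S. \<beta> s *\<^sub>R s) \<in> F" if b: "\<forall>s\<in>S. 0 \<le> \<beta> s" "\<forall>s\<in>S. \<beta> s > 0 \<longrightarrow> s \<in> T" for \<beta>
  proof -
    have "(\<Sum>s\<in>S. \<beta> s *\<^sub>R s) = (\<Sum>s\<in>T. \<beta> s *\<^sub>R s)"
    proof (rule sum.mono_neutral_right[OF S TS])
      show "\<forall>i\<in>S - T. \<beta> i *\<^sub>R i = 0"
      proof
        fix i assume i: "i \<in> S - T"
        then have "\<not> \<beta> i > 0" "0 \<le> \<beta> i" using b by blast+
        then have "\<beta> i = 0" by linarith
        then show "\<beta> i *\<^sub>R i = 0" by simp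
      qed
    qed
    moreover have "\<forall>s\<in>T. 0 \<le> \<beta> s" using b TS by blast
    ultimately show ?thesis unfolding F_def cch_finite[OF fT] by blast
  qed
  have face: "F face_of (convex_cone hull S)"
    unfolding face_of_def
  proof (intro conjI ballI impI)
    show "F \<subseteq> convex_cone hull S" unfolding F_def by (rule hull_mono[OF TS])
    show "convex F" unfolding F_def by (rule convex_convex_cone_hull)
    fix a b z assume a: "a \<in> convex_cone hull S" and b: "b \<in> convex_cone hull S" and z: "z \<in> F"
      and seg: "z \<in> open_segment a b"
    obtain u where u: "0 < u" "u < 1" "z = (1 - u) *\<^sub>R a + u *\<^sub>R b"
      using seg unfolding in_segment by blast
    obtain \<alpha> where \<alpha>: "\<forall>s\<in>S. 0 \<le> \<alpha> s" "a = (\<Sum>s\<in>S. \<alpha> s *\<^sub>R s)"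
      using a unfolding cch_finite[OF S] by blast
    obtain \<beta> where \<beta>: "\<forall>s\<in>S. 0 \<le> \<beta> s" "b = (\<Sum>s\<in>S. \<beta> s *\<^sub>R s)"
      using b unfolding cch_finite[OF S] by blast
    define \<gamma> where "\<gamma> s = (1 - u) * \<alpha> s + u * \<beta> s" for s
    have \<gamma>nn: "\<forall>s\<in>S. 0 \<le> \<gamma> s" unfolding \<gamma>_def using \<alpha> \<beta> u by auto
    have z\<gamma>: "z = (\<Sum>s\<in>S. \<gamma> s *\<^sub>R s)"
      unfolding \<gamma>_def u(3) \<alpha>(2) \<beta>(2)
      by (simp add: scaleR_add_left sum.distrib scaleR_sum_right)
    have "\<forall>s\<in>S. \<alpha> s > 0 \<longrightarrow> s \<in> T"
    proof (intro ballI impI)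
      fix s assume s: "s \<in> S" "\<alpha> s > 0"
      have "\<gamma> s > 0" unfolding \<gamma>_def using s \<beta> u by (auto intro!: add_pos_nonneg)
      then show "s \<in> T" using keyG[OF z \<gamma>nn z\<gamma> s(1)] by blast
    qed
    then show "a \<in> F" using inF \<alpha> by auto
    have "\<forall>s\<in>S. \<beta> s > 0 \<longrightarrow> s \<in> T"
    proof (intro ballI impI)
      fix s assume s: "s \<in> S" "\<beta> s > 0"
      have "\<gamma> s > 0" unfolding \<gamma>_def using s \<alpha> u by (auto intro!: add_nonneg_pos)
      then show "s \<in> T" using keyG[OF z \<gamma>nn z\<gamma> s(1)] by blast
    qed
    then show "b \<in> F" using inF \<beta> by auto
  qed
  have Fne: "F \<noteq> {}" unfolding F_def by (rule convex_cone_hull_nonempty)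
  have WT: "{a \<in> S. a \<in> F} = T"
  proof
    show "T \<subseteq> {a \<in> S. a \<in> F}" using TS unfolding F_def by (auto intro: hull_inc)
    show "{a \<in> S. a \<in> F} \<subseteq> T"
    proof safe
      fix s assume s: "s \<in> S" "s \<in> F"
      define \<alpha> where "\<alpha> s' = (if s' = s then 1 else (0::real))" for s'
      have "(\<Sum>s'\<in>S. \<alpha> s' *\<^sub>R s') = (\<Sum>s'\<in>S. if s' = s then s else 0)"
        by (intro sum.cong) (auto simp: \<alpha>_def)
      also have "\<dots> = s" using S s by simp
      finally have "(\<Sum>s'\<in>S. \<alpha> s' *\<^sub>R s') = s" .
      then show "s \<in> T" using keyG[OF s(2), of \<alpha> s] s unfolding \<alpha>_def by auto
    qed
  qed
  have sub: "padic_gen_subspace p T" using H face Fne WT by metis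
  have xT: "x = (\<Sum>s\<in>T. lam s *\<^sub>R s)"
    unfolding lam_sum using lam0 by (intro sum.mono_neutral_right[OF S TS]) auto
  have "x \<in> span T" unfolding xT by (intro span_sum span_mul span_base) auto
  then obtain \<mu> where \<mu>: "\<forall>s\<in>T. padic_rat p (\<mu> s)" "x = (\<Sum>s\<in>T. \<mu> s *\<^sub>R s)"
    using sub xi unfolding padic_gen_subspace_def by blast
  define d where "d s = lam s - \<mu> s" for s
  have kerd: "(\<Sum>s\<in>T. d s *\<^sub>R s) = 0"
    unfolding d_def using xT \<mu>(2) by (simp add: scaleR_diff_left sum_subtractf)
  define e0 where "e0 = Min (insert 1 (lam ` T))"
  have e0: "e0 > 0" unfolding e0_def using fT lam_pos by (subst Min_gr_iff) auto
  have e0le: "e0 \<le> lam t" if "t \<in> T" for t unfolding e0_def using fT that by (intro Min_le) auto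
  obtain k where k: "\<forall>s\<in>T. padic_rat p (k s)" "(\<Sum>s\<in>T. k s *\<^sub>R s) = 0" "\<forall>s\<in>T. \<bar>k s - d s\<bar> < e0"
    using kernel_dense[OF fT _ kerd p e0] Sint TS by blast
  define c where "c s = (if s \<in> T then \<mu> s + k s else 0)" for s
  have "\<forall>s\<in>S. c s \<ge> 0 \<and> padic_rat p (c s)"
  proof
    fix s assume "s \<in> S"
    show "c s \<ge> 0 \<and> padic_rat p (c s)"
    proof (cases "s \<in> T")
      case True
      have "\<mu> s + k s = lam s - (d s - k s)" unfolding d_def by simp
      moreover have "\<bar>k s - d s\<bar> < e0" using k(3) True by blast
      ultimately have "\<mu> s + k s \<ge> 0" using e0le[OF True] by linarith
      then show ?thesis unfolding c_def using True padic_add[OF p0] \<mu>(1) k(1) by auto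
    next
      case False then show ?thesis unfolding c_def by (simp add: padic_zero)
    qed
  qed
  moreover have "x = (\<Sum>s\<in>S. c s *\<^sub>R s)"
  proof -
    have "(\<Sum>s\<in>S. c s *\<^sub>R s) = (\<Sum>s\<in>T. c s *\<^sub>R s)"
      unfolding c_def by (intro sum.mono_neutral_right[OF S TS]) auto
    also have "\<dots> = (\<Sum>s\<in>T. \<mu> s *\<^sub>R s) + (\<Sum>s\<in>T. k s *\<^sub>R s)"
      unfolding c_def by (simp add: scaleR_add_left sum.distrib)
    also have "\<dots> = x" using \<mu>(2) k(2) by simp
    finally show ?thesis by simp
  qed
  ultimately show "\<exists>c. (\<forall>s\<in>S. 0 \<le> c s \<and> padic_rat p (c s)) \<and> x = (\<Sum>s\<in>S. c s *\<^sub>R s)" by blast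
qed


theorem theorem1p2:
  fixes S :: "(real ^ 'm) set" and p :: nat
  assumes "finite S"
    and "\<forall>a\<in>S. integral_vec a"
    and "prime p"
  shows "padic_gen_cone p S \<longleftrightarrow>
    (\<forall>F. F face_of (convex_cone hull S) \<and> F \<noteq> {} \<longrightarrow>
         padic_gen_subspace p {a \<in> S. a \<in> F})"
proof -
  have p2: "p \<ge> 2" using assms(3) by (rule prime_ge_2_nat)
  then have p0: "p > 0" by simp
  show ?thesis
  proof
    assume "padic_gen_cone p S"
    then show "\<forall>F. F face_of (convex_cone hull S) \<and> F \<noteq> {} \<longrightarrow> padic_gen_subspace p {a \<in> S. a \<in> F}"
      using dir1[OF assms(1,2) p0] by blast
  next
    assume "\<forall>F. F face_of (convex_cone hull S) \<and> F \<noteq> {} \<longrightarrow> padic_gen_subspace p {a \<in> S. a \<in> F}"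
    then show "padic_gen_cone p S" using dir2[OF assms(1,2) p2] by blast
  qed
qed

end
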